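(* Define words over $\{\sigma,\tau\}$ by $W_0=\sigma$ and, for $1\le k\le n-4$, $$W_k=\tau\cdot\prod_{i=1}^{n-2}\sigma^i\,W_{\Delta(k,i)}\,\gamma_{n-2-i}.$$ Then for every $k\in\{1,\dots,n-4\}$ and every seed $\psi\notin Hub_n$ with $height(\psi)=k$, the permutation $\widetilde\psi$ precedes $\psi^{(n-1)}$ on $PATH(n)$ and the word of edge labels of the subpath of $PATH(n)$ from $\widetilde\psi$ to $\psi^{(n-1)}$ equals $W_k$.
   Context: Fix an integer $n\ge 5$. An $n$-permutation is a sequence $(a_1,\dots,a_n)$ of the distinct elements of $\{1,\dots,n\}$. For $\pi=(a_1,\dots,a_n)$ put $\sigma(\pi)=(a_2,\dots,a_n,a_1)$ and $\tau(\pi)=(a_2,a_1,a_3,\dots,a_n)$. On $\{1,\dots,n-1\}$ let $a\oplus 1=a+1$ for $a<n-1$ and $(n-1)\oplus 1=1$; $a\ominus 1$ is the unique $b$ with $b\oplus 1=a$, and $a\oplus j$, $a\ominus j$ denote $j$-fold iterates. A seed is an $(n-1)$-tuple $\psi=(a_1,\dots,a_{n-1})$ of distinct elements of $\{1,\dots,n\}$ with $a_1=n$ and $a_2\oplus1\notin\{a_1,\dots,a_{n-1}\}$; its missing element is $mis(\psi)=a_2\oplus 1$. The package $perms(\psi)$ is the set of all $n$-permutations obtained from $\psi$ by inserting $mis(\psi)$ at any position and then applying any cyclic rotation. For a seed $\psi=(a_1,\dots,a_{n-1})$ with $x=mis(\psi)$: $height(\psi)$ is the largest $k\in\{1,\dots,n-2\}$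 such that $a_i=a_{i+1}\oplus 1$ for all $2\le i\le k$; $\widetilde\psi=(a_1,x,a_2,\dots,a_{n-1})$; $\psi^{(n-1)}=(x,a_2,\dots,a_{n-1},a_1)$. $Hub_n$ is the set of the $n-1$ seeds $(n,b,b\ominus1,\dots,b\ominus(n-3))$, $b\in\{1,\dots,n-1\}$. $\Delta(k,i)=\min(k-1,n-2-i)$. Words over $\{\sigma,\tau\}$ act on permutations left to right; $\sigma^i$ is $i$ copies of $\sigma$, $\gamma_k=\sigma^k\tau$, and $\prod_{i=a}^b u_i$ is the concatenation $u_au_{a+1}\cdots u_b$. Let $\pi_0=(n,n-1,\dots,1)$. For a seed $\psi$ with $x=mis(\psi)$ let $E(\psi)$ be the set of labelled directed edges consisting of a $\tau$-edge $\pi\to\tau(\pi)$ for every $\pi\in perms(\psi)$ whose second entry is $x$, and a $\sigma$-edge $\pi\to\sigma(\pi)$ for every $\pi\in perms(\psi)$ whose second entry is not $x$. Let $P$ be the union of $E(\psi)$ over all seeds; delete from $P$ every $\sigma$-edge leaving a vertex that has an outgoing $\tau$-edge in $P$; then add the $\sigma$-edge $\pi_0\to\sigma(\pi_0)$ and delete the $\tau$-edges $\pi_0\to\tau(\pi_0)$ and $\tau(\sigma(\pi_0))\to\sigma(\pi_0)$. The resulting graph $PATH(n)$ is a Hamiltonian path on all $n!$ $n$-permutations (the Sawada–Williams $\sigma\tau$-path), starting at $\tau(\pi_0)$. *)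

theory Defs
  imports Main
begin

datatype lab = Sig | Tau

definition sig :: "nat list \<Rightarrow> nat list" where
  "sig p = tl p @ [hd p]"

definition tau :: "nat list \<Rightarrow> nat list" where
  "tau p = (p ! 1) # (p ! 0) # drop 2 p"

definition act1 :: "lab \<Rightarrow> nat list \<Rightarrow> nat list" where
  "act1 l p = (case l of Sig \<Rightarrow> sig p | Tau \<Rightarrow> tau p)"

text \<open>Words act left to right.\<close>
definition act :: "lab list \<Rightarrow> nat list \<Rightarrow> nat list" where
  "act w p = fold act1 w p"

definition is_nperm :: "nat \<Rightarrow> nat list \<Rightarrow> bool" where
  "is_nperm n p \<longleftrightarrow> length p = n \<and> distinct p \<and> set p = {1..n}"

definition oplus1 :: "nat \<Rightarrow> nat \<Rightarrow> nat" where
  "oplus1 n a = (if a < n - 1 then a + 1 else 1)"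

definition ominus1 :: "nat \<Rightarrow> nat \<Rightarrow> nat" where
  "ominus1 n a = (if 1 < a then a - 1 else n - 1)"

text \<open>Seeds (1-based entry a_i is list index i-1).\<close>
definition is_seed :: "nat \<Rightarrow> nat list \<Rightarrow> bool" where
  "is_seed n s \<longleftrightarrow> length s = n - 1 \<and> distinct s \<and> set s \<subseteq> {1..n} \<and>
     s ! 0 = n \<and> oplus1 n (s ! 1) \<notin> set s"

definition mis :: "nat \<Rightarrow> nat list \<Rightarrow> nat" where
  "mis n s = oplus1 n (s ! 1)"

definition perms :: "nat \<Rightarrow> nat list \<Rightarrow> nat list set" where
  "perms n s = {rotate r (take j s @ [mis n s] @ drop j s) | j r. j \<le> n - 1 \<and> r < n}"

definition height :: "nat \<Rightarrow> nat list \<Rightarrow> nat" where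
  "height n s = (GREATEST k. 1 \<le> k \<and> k \<le> n - 2 \<and>
      (\<forall>i. 2 \<le> i \<and> i \<le> k \<longrightarrow> s ! (i - 1) = oplus1 n (s ! i)))"

definition tilde :: "nat \<Rightarrow> nat list \<Rightarrow> nat list" where
  "tilde n s = hd s # mis n s # tl s"

definition psi_last :: "nat \<Rightarrow> nat list \<Rightarrow> nat list" where
  "psi_last n s = mis n s # tl s @ [hd s]"

definition Hub :: "nat \<Rightarrow> nat list set" where
  "Hub n = {n # map (\<lambda>j. (ominus1 n ^^ j) b) [0..<n - 2] | b. b \<in> {1..n - 1}}"

text \<open>W_k, with Delta(k,i) = min(k-1, n-2-i); gamma_j = sigma^j tau.\<close>
fun W :: "nat \<Rightarrow> nat \<Rightarrow> lab list" where
  "W n 0 = [Sig]"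
| "W n (Suc k) = Tau # concat (map (\<lambda>i. replicate i Sig @ W n (min k (n - 2 - i))
        @ replicate (n - 2 - i) Sig @ [Tau]) [1..<n - 1])"

definition E :: "nat \<Rightarrow> nat list \<Rightarrow> (nat list \<times> lab \<times> nat list) set" where
  "E n s = {(p, Tau, tau p) | p. p \<in> perms n s \<and> p ! 1 = mis n s}
         \<union> {(p, Sig, sig p) | p. p \<in> perms n s \<and> p ! 1 \<noteq> mis n s}"

definition pi0 :: "nat \<Rightarrow> nat list" where
  "pi0 n = rev [1..<n + 1]"

definition P0 :: "nat \<Rightarrow> (nat list \<times> lab \<times> nat list) set" where
  "P0 n = (\<Union>s \<in> {s. is_seed n s}. E n s)"

definition PATH :: "nat \<Rightarrow> (nat list \<times> lab \<times> nat list) set" where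
  "PATH n = ((P0 n - {(p, Sig, q) | p q. \<exists>r. (p, Tau, r) \<in> P0 n})
             \<union> {(pi0 n, Sig, sig (pi0 n))})
            - {(pi0 n, Tau, tau (pi0 n)), (tau (sig (pi0 n)), Tau, sig (pi0 n))}"

fun follows :: "(nat list \<times> lab \<times> nat list) set \<Rightarrow> nat list \<Rightarrow> lab list \<Rightarrow> bool" where
  "follows G p [] = True"
| "follows G p (l # w) = ((p, l, act1 l p) \<in> G \<and> follows G (act1 l p) w)"

end

theory Submission
  imports Defs
begin


lemma remove1_rotate1:
  assumes "distinct zs"
  shows "\<exists>t. remove1 y (rotate1 zs) = rotate t (remove1 y zs)"
proof (cases zs)
  case Nil then show ?thesis by (intro exI[of _ 0]) simp
next
  case (Cons a zs')
  show ?thesis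
  proof (cases "a = y")
    case True
    then show ?thesis using assms Cons by (intro exI[of _ 0]) (simp add: remove1_append)
  next
    case False
    then have "remove1 y (rotate1 zs) = rotate1 (remove1 y zs)"
      using Cons by (simp add: remove1_append remove1_idem)
    then show ?thesis by (intro exI[of _ 1]) simp
  qed
qed

lemma remove1_rotate:
  assumes "distinct xs"
  shows "\<exists>t. remove1 y (rotate r xs) = rotate t (remove1 y xs)"
proof (induction r)
  case 0 then show ?case by (intro exI[of _ 0]) simp
next
  case (Suc r)
  then obtain t where t: "remove1 y (rotate r xs) = rotate t (remove1 y xs)" by blast
  obtain t' where "remove1 y (rotate1 (rotate r xs)) = rotate t' (remove1 y (rotate r xs))"
    using remove1_rotate1[of "rotate r xs" y] assms by auto
  then show ?case using t by (auto simp: rotate_rotate)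
qed

lemma rotate_back:
  assumes "rotate a K = rotate b S" "length K = length S"
  shows "\<exists>c. S = rotate c K"
proof -
  let ?l = "length S"
  show ?thesis
  proof (cases "?l = 0")
    case True then show ?thesis using assms by (intro exI[of _ 0]) simp
  next
    case False
    have "rotate (?l - b mod ?l) (rotate b S) = rotate (?l - b mod ?l + b) S" by (simp add: rotate_rotate)
    also have "\<dots> = S"
    proof -
      have "(?l - b mod ?l + b) mod ?l = 0"
        using False by (metis add.commute le_add_diff_inverse mod_add_left_eq mod_le_divisor mod_self neq0_conv)
      then show ?thesis by simp
    qed
    finally show ?thesis using assms(1) by (metis rotate_rotate)
  qed
qed

lemma rotate_fix_hd:
  assumes "distinct K" "K \<noteq> []" "rotate c K ! 0 = K ! 0"
  shows "rotate c K = K"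
proof -
  have "rotate c K ! 0 = K ! (c mod length K)" using assms by (simp add: nth_rotate)
  then have "c mod length K = 0" using assms nth_eq_iff_index_eq[of K "c mod length K" 0] by simp
  then show ?thesis by simp
qed

lemma rotate_eq_distinct:
  assumes "distinct K" "K \<noteq> []" "length K = length S" "rotate a K = rotate b S" "K ! 0 = S ! 0"
  shows "K = S"
proof -
  obtain c where c: "S = rotate c K" using rotate_back assms by blast
  then have "rotate c K ! 0 = K ! 0" using assms by simp
  then show ?thesis using rotate_fix_hd assms c by metis
qed




lemma oplus1_range: "2 \<le> n \<Longrightarrow> 1 \<le> oplus1 n a \<and> oplus1 n a \<le> n - 1"
  by (auto simp: oplus1_def)

lemma seedD:
  assumes "is_seed n s"
  shows "length s = n - 1" "distinct s" "set s \<subseteq> {1..n}" "s ! 0 = n" "mis n s \<notin> set s"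
  using assms by (auto simp: is_seed_def mis_def)

lemma perms_remove1:
  assumes "is_seed n s" "p \<in> perms n s"
  shows "\<exists>t. remove1 (mis n s) p = rotate t s"
proof -
  obtain j r where p: "p = rotate r (take j s @ [mis n s] @ drop j s)"
    using assms(2) by (auto simp: perms_def)
  have d: "distinct (take j s @ [mis n s] @ drop j s)"
    using seedD[OF assms(1)] by (auto dest: in_set_takeD in_set_dropD simp: set_take_disj_set_drop_if_distinct)
  have m: "mis n s \<notin> set (take j s)" using seedD(5)[OF assms(1)] in_set_takeD by fastforce
  have "remove1 (mis n s) (take j s @ [mis n s] @ drop j s) = s"
    using m by (simp add: remove1_append)
  then show ?thesis using remove1_rotate[OF d, of "mis n s" r] p by simp
qed

lemma no_tau:
  assumes "2 \<le> n" "is_seed n s" "p \<in> perms n s" "p ! 1 = mis n s"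
    "remove1 (p ! 1) p = rotate t K" "distinct K" "length K = n - 1" "K ! 0 = n"
  shows "oplus1 n (K ! 1) = p ! 1"
proof -
  obtain t' where t': "remove1 (mis n s) p = rotate t' s" using perms_remove1 assms by blast
  have "K \<noteq> []" using assms by auto
  then have "K = s"
    using rotate_eq_distinct[of K s t t'] assms t' seedD[OF assms(2)] by auto
  then show ?thesis using assms(4) by (simp add: mis_def)
qed

definition NT :: "nat \<Rightarrow> nat list \<Rightarrow> bool" where
  "NT n p \<longleftrightarrow> (\<forall>s'. is_seed n s' \<and> p \<in> perms n s' \<longrightarrow> p ! 1 \<noteq> mis n s')"

lemma NT_n: assumes "2 \<le> n" "p ! 1 = n" shows "NT n p"
proof -
  { fix s' have "oplus1 n (s'!1) \<noteq> n" using oplus1_range[of n "s'!1"] assms by auto }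
  then show ?thesis using assms unfolding NT_def mis_def by metis
qed

lemma NT_K:
  assumes "2 \<le> n" "remove1 (p ! 1) p = rotate t K" "distinct K" "length K = n - 1" "K ! 0 = n"
    "oplus1 n (K ! 1) \<noteq> p ! 1"
  shows "NT n p"
  using no_tau[of n _ p t K] assms unfolding NT_def by metis

lemma sig_edge:
  assumes "is_seed n s" "p \<in> perms n s" "p ! 1 \<noteq> mis n s" "NT n p"
  shows "(p, Sig, sig p) \<in> PATH n"
proof -
  have e: "(p, Sig, sig p) \<in> P0 n" using assms unfolding P0_def E_def by blast
  have "\<not> (\<exists>r. (p, Tau, r) \<in> P0 n)"
    using assms(4) unfolding P0_def E_def NT_def by blast
  then show ?thesis using e unfolding PATH_def by blast
qed

lemma tau_edge:
  assumes "is_seed n s" "p \<in> perms n s" "p ! 1 = mis n s" "p \<noteq> pi0 n" "p \<noteq> tau (sig (pi0 n))"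
  shows "(p, Tau, tau p) \<in> PATH n"
proof -
  have e: "(p, Tau, tau p) \<in> P0 n" using assms unfolding P0_def E_def by blast
  then show ?thesis using assms(4,5) unfolding PATH_def by blast
qed

lemma follows_append:
  "follows G p (a @ b) \<longleftrightarrow> follows G p a \<and> follows G (act a p) b"
  by (induction a arbitrary: p) (auto simp: act_def)

lemma act_append: "act (a @ b) p = act b (act a p)"
  by (simp add: act_def)

lemma act_Cons: "act (l # w) p = act w (act1 l p)"
  by (simp add: act_def)

lemma sig_rotate1: "p \<noteq> [] \<Longrightarrow> sig p = rotate1 p"
  by (simp add: sig_def rotate1_hd_tl)

lemma follows_sigs:
  assumes "p \<noteq> []" "\<And>t. t < c \<Longrightarrow> (rotate t p, Sig, sig (rotate t p)) \<in> G"
  shows "follows G p (replicate c Sig) \<and> act (replicate c Sig) p = rotate c p"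
  using assms
proof (induction c arbitrary: p)
  case 0 then show ?case by (simp add: act_def)
next
  case (Suc c)
  have s: "sig p = rotate1 p" using Suc.prems sig_rotate1 by blast
  have "\<And>t. t < c \<Longrightarrow> (rotate t (rotate1 p), Sig, sig (rotate t (rotate1 p))) \<in> G"
  proof -
    fix t assume "t < c"
    then show "(rotate t (rotate1 p), Sig, sig (rotate t (rotate1 p))) \<in> G"
      using Suc.prems(2)[of "Suc t"] by (simp add: rotate1_rotate_swap)
  qed
  moreover have "rotate1 p \<noteq> []" using Suc.prems by simp
  ultimately have IH: "follows G (rotate1 p) (replicate c Sig) \<and> act (replicate c Sig) (rotate1 p) = rotate c (rotate1 p)"
    using Suc.IH by blast
  have "(p, Sig, sig p) \<in> G" using Suc.prems(2)[of 0] by simp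
  then show ?case using IH s by (simp add: act_Cons act1_def rotate1_rotate_swap)
qed

lemma follows_concat:
  assumes "\<And>i. a \<le> i \<Longrightarrow> i < b \<Longrightarrow> follows G (S i) (f i) \<and> act (f i) (S i) = S (Suc i)"
    "a \<le> b"
  shows "follows G (S a) (concat (map f [a..<b])) \<and> act (concat (map f [a..<b])) (S a) = S b"
  using assms
proof (induction b)
  case 0 then show ?case by (simp add: act_def)
next
  case (Suc b)
  show ?case
  proof (cases "a = Suc b")
    case True then show ?thesis by (simp add: act_def)
  next
    case False
    then have "a \<le> b" using Suc.prems by simp
    then have IH: "follows G (S a) (concat (map f [a..<b])) \<and> act (concat (map f [a..<b])) (S a) = S b"
      using Suc by simp
    have "follows G (S b) (f b) \<and> act (f b) (S b) = S (Suc b)" using Suc.prems \<open>a \<le> b\<close> by simp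
    then show ?thesis using IH \<open>a \<le> b\<close> by (simp add: follows_append act_append)
  qed
qed




definition HP :: "nat \<Rightarrow> nat list \<Rightarrow> nat \<Rightarrow> bool" where
  "HP n s k \<longleftrightarrow> 1 \<le> k \<and> k \<le> n - 2 \<and> (\<forall>i. 2 \<le> i \<and> i \<le> k \<longrightarrow> s ! (i - 1) = oplus1 n (s ! i))"

lemma height_HP: "height n s = Greatest (HP n s)"
  unfolding height_def HP_def by simp

lemma HP_bound: "HP n s y \<Longrightarrow> y \<le> n - 2" by (simp add: HP_def)

lemma height_D:
  assumes "3 \<le> n" "height n s = k"
  shows "1 \<le> k" "k \<le> n - 2" "\<And>i. 2 \<le> i \<Longrightarrow> i \<le> k \<Longrightarrow> s ! (i - 1) = oplus1 n (s ! i)"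
    "k < n - 2 \<Longrightarrow> s ! k \<noteq> oplus1 n (s ! Suc k)"
proof -
  have h1: "HP n s 1" using assms by (simp add: HP_def)
  have hk: "HP n s k" using GreatestI_nat[of "HP n s" 1 "n-2", OF h1 HP_bound] assms height_HP by simp
  then show "1 \<le> k" "k \<le> n - 2" "\<And>i. 2 \<le> i \<Longrightarrow> i \<le> k \<Longrightarrow> s ! (i - 1) = oplus1 n (s ! i)"
    by (auto simp: HP_def)
  show "k < n - 2 \<Longrightarrow> s ! k \<noteq> oplus1 n (s ! Suc k)"
  proof
    assume a: "k < n - 2" "s ! k = oplus1 n (s ! Suc k)"
    have "HP n s (Suc k)" using hk a unfolding HP_def by (auto simp: le_Suc_eq)
    then have "Suc k \<le> height n s" using Greatest_le_nat[of "HP n s" "Suc k" "n-2"] HP_bound height_HP by metis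
    then show False using assms by simp
  qed
qed

lemma height_eqI:
  assumes "1 \<le> h" "h \<le> n - 2" "\<And>i. 2 \<le> i \<Longrightarrow> i \<le> h \<Longrightarrow> s ! (i - 1) = oplus1 n (s ! i)"
    "h < n - 2 \<Longrightarrow> s ! h \<noteq> oplus1 n (s ! Suc h)"
  shows "height n s = h"
  unfolding height_HP
proof (rule Greatest_equality)
  show "HP n s h" using assms by (simp add: HP_def)
  fix y assume y: "HP n s y"
  show "y \<le> h"
  proof (rule ccontr)
    assume "\<not> y \<le> h"
    then have "Suc h \<le> y" by simp
    have all: "\<forall>i. 2 \<le> i \<and> i \<le> y \<longrightarrow> s ! (i - 1) = oplus1 n (s ! i)" using y by (simp add: HP_def)
    have "s ! (Suc h - 1) = oplus1 n (s ! Suc h)" using all[rule_format, of "Suc h"] assms(1) \<open>Suc h \<le> y\<close> by simp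
    then have "s ! h = oplus1 n (s ! Suc h)" by simp
    moreover have "h < n - 2" using y \<open>Suc h \<le> y\<close> by (simp add: HP_def)
    ultimately show False using assms(4) by simp
  qed
qed

lemma height_ge: "HP n s h \<Longrightarrow> h \<le> height n s"
  using Greatest_le_nat[of "HP n s" h "n-2"] HP_bound height_HP by metis

lemma oplus_pow:
  assumes "2 \<le> n" "1 \<le> a" "a \<le> n - 1"
  shows "(oplus1 n ^^ m) a = (a - 1 + m) mod (n - 1) + 1"
proof (induction m)
  case 0 then show ?case using assms by simp
next
  case (Suc m)
  let ?b = "(a - 1 + m) mod (n - 1)"
  have lt: "?b < n - 1" using assms by simp
  have "(oplus1 n ^^ Suc m) a = oplus1 n (?b + 1)" using Suc by simp
  also have "\<dots> = (if ?b + 1 < n - 1 then ?b + 2 else 1)" by (simp add: oplus1_def)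
  also have "\<dots> = (a - 1 + Suc m) mod (n - 1) + 1"
  proof (cases "?b + 1 < n - 1")
    case True
    then have "(a - 1 + Suc m) mod (n - 1) = ?b + 1" by (simp add: mod_Suc)
    then show ?thesis using True by simp
  next
    case False
    then have "(a - 1 + Suc m) mod (n - 1) = 0" using lt by (simp add: mod_Suc)
    then show ?thesis using False by simp
  qed
  finally show ?case .
qed

lemma oplus2_ne: "5 \<le> n \<Longrightarrow> oplus1 n (oplus1 n a) \<noteq> a"
  by (auto simp: oplus1_def split: if_splits)

lemma mod_wrap:
  fixes a m d :: nat
  assumes "(a + m) mod d = a" "a < d" "0 < m" "m < d"
  shows False
proof (cases "a + m < d")
  case True
  then have "(a + m) mod d = a + m" by simp
  then show ?thesis using assms by simp
next
  case False
  then have "(a + m) mod d = a + m - d" using assms by (simp add: le_mod_geq)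
  then show ?thesis using assms by simp
qed

lemma chain_pow:
  assumes "\<And>i. 2 \<le> i \<Longrightarrow> i \<le> k \<Longrightarrow> s ! (i - 1) = oplus1 n (s ! i)" "1 \<le> e" "e \<le> k"
  shows "s ! 1 = (oplus1 n ^^ (e - 1)) (s ! e)"
  using assms(2,3)
proof (induction e)
  case 0 then show ?case by simp
next
  case (Suc e)
  show ?case
  proof (cases "e = 0")
    case True then show ?thesis by simp
  next
    case False
    then have "s ! 1 = (oplus1 n ^^ (e - 1)) (s ! e)" using Suc by simp
    also have "s ! e = oplus1 n (s ! Suc e)" using assms(1)[of "Suc e"] Suc.prems False by simp
    finally show ?thesis using False by (simp add: funpow_swap1) (metis Suc_pred funpow_Suc_right neq0_conv o_apply)
  qed
qed




definition Lj :: "nat \<Rightarrow> nat list \<Rightarrow> nat \<Rightarrow> nat list" where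
  "Lj n s j = take j s @ mis n s # drop j s"

lemma pi0_form: "5 \<le> n \<Longrightarrow> pi0 n = n # (n - 1) # (n - 2) # rev [1..<n - 2]"
proof -
  assume "5 \<le> n"
  define m where "m = n - 3"
  have m: "n + 1 = m + 1 + 3" "n - 2 = m + 1" using \<open>5 \<le> n\<close> m_def by simp_all
  have a: "[1..<m+1+3] = [1..<m+1] @ [m+1..<m+1+3]" by (rule upt_add_eq_append) simp
  have b: "[m+1..<m+1+3] = [m+1, m+2, m+3]" by (simp add: upt_rec)
  have "pi0 n = rev [1..<m+1+3]" unfolding pi0_def m(1) ..
  also have "\<dots> = [m+3, m+2, m+1] @ rev [1..<m+1]" unfolding a b by simp
  finally show ?thesis unfolding m(2) using m_def \<open>5 \<le> n\<close> by simp
qed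

lemma rev_form: "5 \<le> n \<Longrightarrow> rev [1..<n - 1] = (n - 2) # rev [1..<n - 2]"
proof -
  assume "5 \<le> n"
  then have m: "n = (n - 3) + 3" by simp
  define m where "m = n - 3"
  have m: "n = m + 3" using m m_def by simp
  show ?thesis unfolding m by (simp add: upt_Suc_append)
qed

lemma tsp_form: "5 \<le> n \<Longrightarrow> tau (sig (pi0 n)) = (n - 2) # (n - 1) # rev [1..<n - 2] @ [n]"
  by (simp add: pi0_form sig_def tau_def)

locale SD =
  fixes n :: nat and \<psi> :: "nat list"
  assumes n5: "5 \<le> n" and sd: "is_seed n \<psi>"
begin

lemma lenP: "length \<psi> = n - 1" using seedD[OF sd] by simp
lemma distP: "distinct \<psi>" using seedD[OF sd] by simp
lemma setP: "set \<psi> \<subseteq> {1..n}" using seedD[OF sd] by simp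
lemma P0: "\<psi> ! 0 = n" using seedD[OF sd] by simp
lemma xnot: "mis n \<psi> \<notin> set \<psi>" using seedD[OF sd] by simp
lemma xr: "1 \<le> mis n \<psi> \<and> mis n \<psi> \<le> n - 1" using oplus1_range n5 by (simp add: mis_def)
lemma Pcons: "\<psi> = n # tl \<psi>"
proof -
  have "\<psi> \<noteq> []" using lenP n5 by auto
  then show ?thesis using P0 by (metis hd_Cons_tl hd_conv_nth)
qed

lemma Pne: "1 \<le> e \<Longrightarrow> e < n - 1 \<Longrightarrow> \<psi> ! e \<noteq> n"
proof -
  assume a: "1 \<le> e" "e < n - 1"
  have "(\<psi> ! e = \<psi> ! 0) = (e = 0)"
    by (rule nth_eq_iff_index_eq[OF distP]) (use lenP a in simp_all)
  then show ?thesis using a P0 by simp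
qed

lemma Pr: "1 \<le> e \<Longrightarrow> e < n - 1 \<Longrightarrow> 1 \<le> \<psi> ! e \<and> \<psi> ! e \<le> n - 1"
proof -
  assume a: "1 \<le> e" "e < n - 1"
  have "\<psi> ! e \<in> set \<psi>" by (rule nth_mem) (use lenP a in simp)
  then have "\<psi> ! e \<in> {1..n}" using setP by blast
  then show ?thesis using Pne[OF a] by auto
qed

lemma lenL: "j \<le> n - 1 \<Longrightarrow> length (Lj n \<psi> j) = n"
  using lenP n5 by (simp add: Lj_def)

lemma distL: "distinct (Lj n \<psi> j)"
proof -
  have h: "distinct (take j \<psi> @ drop j \<psi>)" using distP by simp
  have "mis n \<psi> \<notin> set (take j \<psi>)" "mis n \<psi> \<notin> set (drop j \<psi>)" using xnot in_set_takeD in_set_dropD by metis+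
  then show ?thesis using h unfolding Lj_def distinct_append by auto
qed

lemma setL: "set (Lj n \<psi> j) = insert (mis n \<psi>) (set \<psi>)"
proof -
  have "set (take j \<psi>) \<union> set (drop j \<psi>) = set \<psi>" by (metis set_append append_take_drop_id)
  then show ?thesis by (auto simp: Lj_def)
qed

lemma nthL:
  assumes "e < n" "j \<le> n - 1"
  shows "Lj n \<psi> j ! e = (if e < j then \<psi> ! e else if e = j then mis n \<psi> else \<psi> ! (e - 1))"
proof -
  have lt: "length (take j \<psi>) = j" using assms lenP by simp
  show ?thesis
  proof (cases "e < j")
    case True then show ?thesis using lt by (simp add: Lj_def nth_append)
  next
    case False
    show ?thesis
    proof (cases "e = j")
      case True then show ?thesis using lt by (simp add: Lj_def nth_append)
    next
      case False2: False
      then have "Lj n \<psi> j ! e = (mis n \<psi> # drop j \<psi>) ! (e - j)" using lt False by (simp add: Lj_def nth_append)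
      also have "\<dots> = drop j \<psi> ! (e - j - 1)" using False False2 by (simp add: nth_Cons')
      also have "\<dots> = \<psi> ! (j + (e - j - 1))" using assms lenP by (subst nth_drop) auto
      also have "j + (e - j - 1) = e - 1" using False False2 by simp
      finally show ?thesis using False False2 by simp
    qed
  qed
qed

lemma permsL: "j \<le> n - 1 \<Longrightarrow> r < n \<Longrightarrow> rotate r (Lj n \<psi> j) \<in> perms n \<psi>"
proof -
  assume a: "j \<le> n - 1" "r < n"
  have "rotate r (Lj n \<psi> j) = rotate r (take j \<psi> @ [mis n \<psi>] @ drop j \<psi>)" by (simp add: Lj_def)
  then show ?thesis using a unfolding perms_def by blast
qed

lemma L_form:
  assumes "1 \<le> j" "j \<le> n - 1"
  shows "rotate (j - 1) (Lj n \<psi> j) = \<psi> ! (j - 1) # mis n \<psi> # drop j \<psi> @ take (j - 1) \<psi>"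
    "rotate (j - 1) (Lj n \<psi> (j - 1)) = mis n \<psi> # \<psi> ! (j - 1) # drop j \<psi> @ take (j - 1) \<psi>"
proof -
  have jl: "j - 1 < length \<psi>" using assms lenP by simp
  have jj: "Suc (j - 1) = j" using assms by simp
  have tk: "take j \<psi> = take (j - 1) \<psi> @ [\<psi> ! (j - 1)]"
    using take_Suc_conv_app_nth[OF jl] jj by simp
  have dr: "drop (j - 1) \<psi> = \<psi> ! (j - 1) # drop j \<psi>"
    using Cons_nth_drop_Suc[OF jl] jj by simp
  have lt: "length (take (j - 1) \<psi>) = j - 1" using assms lenP by simp
  have "Lj n \<psi> j = take (j - 1) \<psi> @ (\<psi> ! (j - 1) # mis n \<psi> # drop j \<psi>)"
    unfolding Lj_def tk by simp
  then show "rotate (j - 1) (Lj n \<psi> j) = \<psi> ! (j - 1) # mis n \<psi> # drop j \<psi> @ take (j - 1) \<psi>"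
    using rotate_append[of "take (j - 1) \<psi>"] lt by simp
  have "Lj n \<psi> (j - 1) = take (j - 1) \<psi> @ (mis n \<psi> # \<psi> ! (j - 1) # drop j \<psi>)"
    unfolding Lj_def dr by simp
  then show "rotate (j - 1) (Lj n \<psi> (j - 1)) = mis n \<psi> # \<psi> ! (j - 1) # drop j \<psi> @ take (j - 1) \<psi>"
    using rotate_append[of "take (j - 1) \<psi>"] lt by simp
qed

lemma tauL: "1 \<le> j \<Longrightarrow> j \<le> n - 1 \<Longrightarrow> tau (rotate (j - 1) (Lj n \<psi> j)) = rotate (j - 1) (Lj n \<psi> (j - 1))"
  using L_form by (simp add: tau_def)

lemma tildeL: "tilde n \<psi> = Lj n \<psi> 1"
  using Pcons by (cases \<psi>) (auto simp: tilde_def Lj_def)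

lemma lastL: "psi_last n \<psi> = rotate 1 (Lj n \<psi> 1)"
proof -
  have "Lj n \<psi> 1 = n # mis n \<psi> # tl \<psi>" using Pcons by (cases \<psi>) (auto simp: Lj_def)
  then show ?thesis using Pcons by (cases \<psi>) (auto simp: psi_last_def)
qed

lemma firstL: "rotate (n - 1) (Lj n \<psi> (n - 1)) = Lj n \<psi> 0"
  using rotate_append[of \<psi> "[mis n \<psi>]"] lenP by (simp add: Lj_def)

end



lemma two_cons: "2 \<le> length xs \<Longrightarrow> xs = xs ! 0 # xs ! 1 # drop 2 xs"
  by (cases xs; cases "tl xs") auto

context SD begin

lemma sig_state:
  assumes "2 \<le> j" "j \<le> n - 1" "m < n" "(m + 1) mod n \<noteq> 1" "(m + 1) mod n \<noteq> j"
  shows "(rotate m (Lj n \<psi> j), Sig, sig (rotate m (Lj n \<psi> j))) \<in> PATH n"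
proof -
  let ?L = "Lj n \<psi> j" let ?e = "(m + 1) mod n" let ?p = "rotate m ?L"
  have lL: "length ?L = n" using lenL assms by simp
  have p1: "?p ! 1 = ?L ! ?e" using nth_rotate[of 1 ?L m] lL n5 by simp
  have en: "?e < n" using n5 by simp
  have jn: "j < n" using assms n5 by simp
  have Ljj: "?L ! j = mis n \<psi>" using nthL[of j j] assms jn by simp
  have idx: "\<And>a b. a < n \<Longrightarrow> b < n \<Longrightarrow> (?L ! a = ?L ! b) = (a = b)"
    using nth_eq_iff_index_eq[OF distL] lL by simp
  have neq: "?L ! ?e \<noteq> mis n \<psi>" using idx[OF en jn] assms Ljj by simp
  have perm: "?p \<in> perms n \<psi>" using permsL assms by simp
  have L0: "?L ! 0 = n" using nthL[of 0 j] assms P0 n5 by simp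
  have L1: "?L ! 1 = \<psi> ! 1" using nthL[of 1 j] assms n5 by simp
  have NT: "NT n ?p"
  proof (cases "?e = 0")
    case True
    then show ?thesis using NT_n n5 p1 L0 by simp
  next
    case False
    let ?y = "?L ! ?e"
    obtain t where t: "remove1 ?y ?p = rotate t (remove1 ?y ?L)" using remove1_rotate[OF distL] by blast
    have Lform: "?L = n # \<psi> ! 1 # drop 2 ?L" using two_cons[of ?L] lL n5 L0 L1 by simp
    have yn: "?y \<noteq> n" using idx[OF en, of 0] False L0 n5 by simp
    have y1: "?y \<noteq> \<psi> ! 1" using idx[OF en, of 1] assms L1 n5 by simp
    define K where "K = n # \<psi> ! 1 # remove1 ?y (drop 2 ?L)"
    have rK: "remove1 ?y ?L = K" unfolding K_def using yn y1 by (subst Lform) simp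
    have dK: "distinct K" using rK distL by (metis distinct_remove1)
    have yin: "?y \<in> set ?L" using en lL by simp
    have lK: "length K = n - 1" using rK length_remove1[of ?y ?L] yin lL by simp
    have "oplus1 n (K ! 1) = mis n \<psi>" unfolding K_def by (simp add: mis_def)
    then show ?thesis using NT_K[of n ?p t K] n5 t rK dK lK neq p1 K_def by simp
  qed
  show ?thesis using sig_edge[OF sd perm] NT neq p1 by simp
qed

lemma sig_state0:
  assumes "2 \<le> j" "j \<le> n - 1" "oplus1 n (Lj n \<psi> j ! 2) \<noteq> \<psi> ! 1"
  shows "(Lj n \<psi> j, Sig, sig (Lj n \<psi> j)) \<in> PATH n"
proof -
  let ?L = "Lj n \<psi> j"
  have lL: "length ?L = n" using lenL assms by simp
  have L0: "?L ! 0 = n" using nthL[of 0 j] assms P0 n5 by simp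
  have L1: "?L ! 1 = \<psi> ! 1" using nthL[of 1 j] assms n5 by simp
  have perm: "?L \<in> perms n \<psi>" using permsL[of j 0] assms n5 by simp
  have "\<psi> ! 1 \<in> set \<psi>" by (rule nth_mem) (use lenP n5 in simp)
  then have x1: "\<psi> ! 1 \<noteq> mis n \<psi>" using xnot by auto
  have Lform: "?L = n # \<psi> ! 1 # drop 2 ?L" using two_cons[of ?L] lL n5 L0 L1 by simp
  have pn: "\<psi> ! 1 \<noteq> n" using Pne[of 1] n5 by simp
  define K where "K = n # drop 2 ?L"
  have rK: "remove1 (?L ! 1) ?L = rotate 0 K" unfolding K_def L1 using pn by (subst Lform) simp
  have dK: "distinct K" using rK distL by (metis distinct_remove1 rotate0 id_apply)
  have lK: "length K = n - 1" unfolding K_def using lL n5 by simp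
  have K1: "K ! 1 = ?L ! 2" unfolding K_def using lL n5 by simp
  have NT: "NT n ?L" using NT_K[of n ?L 0 K] n5 rK dK lK K1 assms(3) L1 K_def by simp
  show ?thesis using sig_edge[OF sd perm] NT x1 L1 by simp
qed

lemma psi_rev:
  assumes "tl \<psi> = rev [1..<n - 1]" "1 \<le> i" "i \<le> n - 2"
  shows "\<psi> ! i = n - 1 - i"
proof -
  obtain i' where i': "i = Suc i'" using assms(2) by (cases i) auto
  have "tl \<psi> ! i' = \<psi> ! Suc i'" by (rule nth_tl) (use lenP assms i' in simp)
  then have "\<psi> ! i = rev [1..<n - 1] ! i'" using assms(1) i' by simp
  also have "\<dots> = [1..<n - 1] ! (n - 2 - Suc i')"
    using rev_nth[of i' "[1..<n - 1]"] assms i' n5 by simp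
  also have "\<dots> = n - 1 - i" using assms n5 i' by simp
  finally show ?thesis .
qed

lemma height_rev:
  assumes "tl \<psi> = rev [1..<n - 1]"
  shows "n - 2 \<le> height n \<psi>"
proof (rule height_ge)
  show "HP n \<psi> (n - 2)" unfolding HP_def
  proof (intro conjI allI impI)
    fix i assume i: "2 \<le> i \<and> i \<le> n - 2"
    then have a: "\<psi> ! i = n - 1 - i" using psi_rev[OF assms] by simp
    have "1 \<le> i - 1" "i - 1 \<le> n - 2" using i by auto
    then have b: "\<psi> ! (i - 1) = n - 1 - (i - 1)" using psi_rev[OF assms, of "i - 1"] by simp
    show "\<psi> ! (i - 1) = oplus1 n (\<psi> ! i)" using a b i n5 unfolding oplus1_def by auto
  qed (use n5 in simp_all)
qed


lemma tau_state:
  assumes "1 \<le> j" "j \<le> n - 1" "tl \<psi> \<noteq> rev [1..<n - 1]"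
  shows "(rotate (j - 1) (Lj n \<psi> j), Tau, tau (rotate (j - 1) (Lj n \<psi> j))) \<in> PATH n"
proof -
  let ?p = "rotate (j - 1) (Lj n \<psi> j)"
  have F: "?p = \<psi> ! (j - 1) # mis n \<psi> # drop j \<psi> @ take (j - 1) \<psi>" using L_form assms by simp
  have p1: "?p ! 1 = mis n \<psi>" using F by simp
  have perm: "?p \<in> perms n \<psi>" using permsL[of j "j - 1"] assms n5 by simp
  have tsp: "tau (sig (pi0 n)) = (n - 2) # (n - 1) # rev [1..<n - 2] @ [n]" using tsp_form n5 by simp
  have pi: "pi0 n = n # (n - 1) # (n - 2) # rev [1..<n - 2]" using pi0_form n5 by simp
  have rf: "rev [1..<n - 1] = (n - 2) # rev [1..<n - 2]" using rev_form n5 by simp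
  have tl1: "tl \<psi> = \<psi> ! 1 # drop 2 \<psi>"
    using lenP n5 by (cases \<psi>; cases "tl \<psi>") auto
  have "?p \<noteq> pi0 n \<and> ?p \<noteq> tau (sig (pi0 n))"
  proof (cases "j = 1")
    case True
    then have "?p = n # mis n \<psi> # tl \<psi>" using F P0 by (simp add: drop_Suc)
    then show ?thesis using pi tsp assms(3) rf n5 by auto
  next
    case False
    then have j2: "2 \<le> j" using assms by simp
    have hd: "\<psi> ! (j - 1) \<noteq> n" using Pne[of "j - 1"] assms j2 by simp
    have np: "?p \<noteq> pi0 n" using F pi hd by simp
    moreover have "?p \<noteq> tau (sig (pi0 n))"
    proof (cases "j = 2")
      case True
      have t1: "take 1 \<psi> = [n]" using Pcons by (cases \<psi>) auto
      have F2: "?p = \<psi> ! 1 # mis n \<psi> # drop 2 \<psi> @ [n]" using F True t1 by simp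
      show ?thesis
      proof
        assume "?p = tau (sig (pi0 n))"
        then have eq: "\<psi> ! 1 # mis n \<psi> # (drop 2 \<psi> @ [n]) = (n - 2) # (n - 1) # (rev [1..<n - 2] @ [n])" using F2 tsp by metis
        have c: "\<psi> ! 1 = n - 2" "drop 2 \<psi> @ [n] = rev [1..<n - 2] @ [n]" using eq[unfolded list.inject] by blast+
        then have "\<psi> ! 1 = n - 2" "drop 2 \<psi> = rev [1..<n - 2]" by (blast, metis append1_eq_conv)
        then have "tl \<psi> = rev [1..<n - 1]" using tl1 rf by simp
        then show False using assms(3) by simp
      qed
    next
      case False
      then have j3: "3 \<le> j" using j2 by simp
      have tne: "take (j - 1) \<psi> \<noteq> []" using j3 lenP n5 by (cases \<psi>) auto
      have "last ?p = last (take (j - 1) \<psi>)" using F tne by simp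
      also have "\<dots> = take (j - 1) \<psi> ! (j - 2)" using tne lenP assms j3 by (auto simp add: last_conv_nth min_def numeral_2_eq_2)
      also have "\<dots> = \<psi> ! (j - 2)" using j3 by simp
      finally have "last ?p \<noteq> n" using Pne[of "j - 2"] j3 assms by simp
      moreover have "last (tau (sig (pi0 n))) = n" using tsp by simp
      ultimately show ?thesis by auto
    qed
    ultimately show ?thesis by simp
  qed
  then show ?thesis using tau_edge[OF sd perm p1] by simp
qed


lemma no_wrap:
  assumes "height n \<psi> = k" "k \<le> n - 4" "1 \<le> e" "e \<le> k"
  shows "\<psi> ! e \<noteq> oplus1 n (mis n \<psi>)"
proof
  let ?f = "oplus1 n" let ?x = "mis n \<psi>"
  assume h: "\<psi> ! e = ?f ?x"
  have ch: "\<psi> ! 1 = (?f ^^ (e - 1)) (\<psi> ! e)"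
    using chain_pow[of k \<psi> n e] height_D(3)[OF _ assms(1)] n5 assms by simp
  have "?x = ?f (\<psi> ! 1)" by (simp add: mis_def)
  also have "\<dots> = ?f ((?f ^^ (e - 1)) (?f ?x))" using ch h by simp
  also have "\<dots> = (?f ^^ Suc e) ?x"
  proof -
    have "(?f ^^ (e - 1)) (?f ?x) = (?f ^^ e) ?x"
      using assms(3) by (metis Suc_diff_1 funpow_Suc_right less_le_trans o_apply zero_less_one)
    then show ?thesis by simp
  qed
  also have "\<dots> = (?x - 1 + Suc e) mod (n - 1) + 1" using oplus_pow[of n ?x "Suc e"] xr n5 by simp
  finally have eq: "?x = (?x - 1 + Suc e) mod (n - 1) + 1" .
  then have "(?x - 1 + Suc e) mod (n - 1) = ?x - 1" using xr by linarith
  then show False by (rule mod_wrap) (use xr assms n5 in auto)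
qed

lemma sub_seed:
  assumes hk: "height n \<psi> = k" and k2: "2 \<le> k" and kn: "k \<le> n - 4" and j3: "3 \<le> j" and jn: "j \<le> n - 1"
  defines "\<psi>' \<equiv> n # drop 2 (Lj n \<psi> j)"
  shows "is_seed n \<psi>'" "tilde n \<psi>' = Lj n \<psi> j" "psi_last n \<psi>' = rotate 1 (Lj n \<psi> j)"
    "height n \<psi>' = min (k - 1) (j - 2)"
proof -
  let ?L = "Lj n \<psi> j"
  have lL: "length ?L = n" using lenL jn by simp
  have L0: "?L ! 0 = n" using nthL[of 0 j] jn j3 P0 n5 by simp
  have L1: "?L ! 1 = \<psi> ! 1" using nthL[of 1 j] jn j3 n5 by simp
  have L2: "?L ! 2 = \<psi> ! 2" using nthL[of 2 j] jn j3 n5 by simp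
  have Lform: "?L = n # \<psi> ! 1 # drop 2 ?L" using two_cons[of ?L] lL n5 L0 L1 by simp
  have dL: "distinct ?L" by (rule distL)
  have C2: "\<psi> ! 1 = oplus1 n (\<psi> ! 2)" using height_D(3)[of n \<psi> k 2] hk k2 n5 by simp
  have p'1: "\<psi>' ! 1 = \<psi> ! 2" unfolding \<psi>'_def using L2 lL n5 by simp
  have mis': "mis n \<psi>' = \<psi> ! 1" using p'1 C2 by (simp add: mis_def)
  have nd: "n \<notin> set (drop 2 ?L)" "\<psi> ! 1 \<notin> set (drop 2 ?L)" "n \<noteq> \<psi> ! 1" "distinct (drop 2 ?L)"
    using dL Lform by (metis distinct.simps(2) list.set_intros(1,2))+
  have setL': "set ?L \<subseteq> {1..n}" using setL setP xr by auto
  show "is_seed n \<psi>'"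
    unfolding is_seed_def \<psi>'_def
  proof (intro conjI)
    show "length (n # drop 2 ?L) = n - 1" using lL n5 by simp
    show "distinct (n # drop 2 ?L)" using nd by simp
    show "set (n # drop 2 ?L) \<subseteq> {1..n}" using setL' n5 by (auto dest: in_set_dropD)
    show "(n # drop 2 ?L) ! 0 = n" by simp
    show "oplus1 n ((n # drop 2 ?L) ! 1) \<notin> set (n # drop 2 ?L)"
      using mis' nd unfolding \<psi>'_def mis_def by simp
  qed
  show "tilde n \<psi>' = ?L" unfolding tilde_def mis' using Lform by (simp add: \<psi>'_def)
  have tlL: "tl ?L = \<psi> ! 1 # drop 2 ?L" using Lform by (metis list.sel(3))
  have hdL: "hd ?L = n" using Lform by (metis list.sel(1))
  have "?L \<noteq> []" using lL n5 by auto
  then have "rotate 1 ?L = tl ?L @ [hd ?L]" using rotate1_hd_tl by simp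
  then show "psi_last n \<psi>' = rotate 1 ?L" unfolding psi_last_def mis' using tlL hdL
    by (simp add: \<psi>'_def)
  have p'i: "\<And>i. 1 \<le> i \<Longrightarrow> i < n - 1 \<Longrightarrow> \<psi>' ! i = ?L ! (i + 1)"
  proof -
    fix i :: nat assume i: "1 \<le> i" "i < n - 1"
    then obtain i' where i': "i = Suc i'" by (cases i) auto
    then show "\<psi>' ! i = ?L ! (i + 1)" unfolding \<psi>'_def using lL i by (simp add: nth_drop)
  qed
  define h where "h = min (k - 1) (j - 2)"
  have hb: "1 \<le> h" "h \<le> k - 1" "h \<le> j - 2" "h = k - 1 \<or> h = j - 2" using k2 j3 unfolding h_def by auto
  have Ci: "\<And>i. 2 \<le> i \<Longrightarrow> i \<le> k \<Longrightarrow> \<psi> ! (i - 1) = oplus1 n (\<psi> ! i)"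
    using height_D(3)[OF _ hk] n5 by simp
  have "height n \<psi>' = h"
  proof (rule height_eqI)
    show "1 \<le> h" using hb by simp
    show "h \<le> n - 2" using hb kn by simp
    fix i assume i: "2 \<le> i" "i \<le> h"
    have r: "1 \<le> i - 1" "i - 1 < n - 1" "i < j" "i + 1 < j" "i < n" "i + 1 < n" "i < n - 1"
      "i - 1 + 1 = i" "2 \<le> i + 1" "i + 1 \<le> k" using i jn kn hb by auto
    have a: "\<psi>' ! (i - 1) = \<psi> ! i" using p'i[OF r(1,2)] nthL[of i j] r jn by simp
    have b: "\<psi>' ! i = \<psi> ! (i + 1)" using p'i[of i] nthL[of "i + 1" j] r jn by simp
    show "\<psi>' ! (i - 1) = oplus1 n (\<psi>' ! i)" using a b Ci[OF r(9,10)] by simp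
  next
    assume "h < n - 2"
    have r: "1 \<le> h" "h < n - 1" "h + 1 < j" "h + 1 < n" "h + 2 \<le> j" "h + 2 < n" "Suc h < n - 1"
      using jn kn k2 j3 hb by auto
    have "\<psi>' ! h = Lj n \<psi> j ! (h + 1)" using p'i[OF r(1,2)] .
    also have "\<dots> = \<psi> ! (h + 1)" using nthL[of "h + 1" j] r jn by simp
    finally have a: "\<psi>' ! h = \<psi> ! (h + 1)" .
    have s1: "\<psi>' ! Suc h = Lj n \<psi> j ! (h + 2)" using p'i[of "Suc h"] r by simp
    show "\<psi>' ! h \<noteq> oplus1 n (\<psi>' ! Suc h)"
    proof (cases "h + 2 < j")
      case True
      then have hk1: "h = k - 1" using hb by auto
      have "Lj n \<psi> j ! (h + 2) = \<psi> ! (h + 2)" using nthL[of "h + 2" j] True r jn by simp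
      then have b: "\<psi>' ! Suc h = \<psi> ! Suc k" using s1 hk1 k2 by simp
      have "\<psi> ! k \<noteq> oplus1 n (\<psi> ! Suc k)" using height_D(4)[OF _ hk] n5 kn by simp
      moreover have "h + 1 = k" using hk1 k2 by simp
      ultimately show ?thesis using a b by simp
    next
      case False
      then have hj: "h + 2 = j" using r by simp
      have "Lj n \<psi> j ! (h + 2) = mis n \<psi>" using nthL[of j j] jn j3 n5 hj by simp
      then have b: "\<psi>' ! Suc h = mis n \<psi>" using s1 by simp
      have "1 \<le> j - 1" "j - 1 \<le> k" using hb hj j3 by auto
      then have "\<psi> ! (j - 1) \<noteq> oplus1 n (mis n \<psi>)" using no_wrap[OF hk kn] by simp
      moreover have "h + 1 = j - 1" using hj by simp
      ultimately show ?thesis using a b by simp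
    qed
  qed
  then show "height n \<psi>' = min (k - 1) (j - 2)" using h_def by simp
qed

end



context SD begin

lemma rot_n: "j \<le> n - 1 \<Longrightarrow> rotate n (Lj n \<psi> j) = Lj n \<psi> j"
  using lenL by simp

lemma block:
  assumes hk: "height n \<psi> = k" and k1: "1 \<le> k" and kn: "k \<le> n - 4"
    and IH: "\<And>k2 \<psi>2. k2 < k \<Longrightarrow> is_seed n \<psi>2 \<Longrightarrow> height n \<psi>2 = k2 \<Longrightarrow> 1 \<le> k2 \<Longrightarrow> k2 \<le> n - 4 \<Longrightarrow>
        follows (PATH n) (tilde n \<psi>2) (W n k2) \<and> act (W n k2) (tilde n \<psi>2) = psi_last n \<psi>2"
    and i1: "1 \<le> i" and i2: "i \<le> n - 2"
  shows "follows (PATH n) (rotate (n - i) (Lj n \<psi> (n - i)))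
           (replicate i Sig @ W n (min (k - 1) (n - 2 - i)) @ replicate (n - 2 - i) Sig @ [Tau])
       \<and> act (replicate i Sig @ W n (min (k - 1) (n - 2 - i)) @ replicate (n - 2 - i) Sig @ [Tau])
           (rotate (n - i) (Lj n \<psi> (n - i))) = rotate (n - i - 1) (Lj n \<psi> (n - i - 1))"
proof -
  define j where "j = n - i"
  have j2: "2 \<le> j" and jn: "j \<le> n - 1" and ij: "i + j = n" and nij: "n - 2 - i = j - 2"
    using i1 i2 n5 unfolding j_def by auto
  let ?L = "Lj n \<psi> j"
  have lL: "length ?L = n" using lenL jn by simp
  have Lne: "?L \<noteq> []" using lL n5 by auto
  have A: "follows (PATH n) (rotate j ?L) (replicate i Sig) \<and> act (replicate i Sig) (rotate j ?L) = ?L"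
  proof -
    have "\<And>t. t < i \<Longrightarrow> (rotate t (rotate j ?L), Sig, sig (rotate t (rotate j ?L))) \<in> PATH n"
    proof -
      fix t assume t: "t < i"
      have m: "t + j < n" using t ij by simp
      have e: "(t + j + 1) mod n \<noteq> 1 \<and> (t + j + 1) mod n \<noteq> j"
      proof (cases "t + j + 1 < n")
        case True then show ?thesis using j2 by simp
      next
        case False then have "t + j + 1 = n" using m by simp
        then show ?thesis using j2 n5 by simp
      qed
      show "(rotate t (rotate j ?L), Sig, sig (rotate t (rotate j ?L))) \<in> PATH n"
        using sig_state[OF j2 jn m] e by (simp add: rotate_rotate)
    qed
    moreover have "rotate j ?L \<noteq> []" using Lne by simp
    ultimately have "follows (PATH n) (rotate j ?L) (replicate i Sig) \<and> act (replicate i Sig) (rotate j ?L) = rotate i (rotate j ?L)"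
      using follows_sigs by blast
    moreover have "rotate i (rotate j ?L) = ?L" using rot_n[OF jn] ij by (simp add: rotate_rotate)
    ultimately show ?thesis by simp
  qed
  define d where "d = min (k - 1) (n - 2 - i)"
  have B: "follows (PATH n) ?L (W n d) \<and> act (W n d) ?L = rotate 1 ?L"
  proof (cases "d = 0")
    case True
    have "oplus1 n (?L ! 2) \<noteq> \<psi> ! 1"
    proof (cases "j = 2")
      case True
      then have "?L ! 2 = mis n \<psi>" using nthL[of 2 j] jn n5 by simp
      then show ?thesis using oplus2_ne[OF n5] by (simp add: mis_def)
    next
      case False
      then have "?L ! 2 = \<psi> ! 2" using nthL[of 2 j] jn n5 j2 by simp
      moreover have "k = 1" using True False j2 k1 unfolding d_def nij by auto
      moreover have "\<psi> ! 1 \<noteq> oplus1 n (\<psi> ! Suc 1)" using height_D(4)[OF _ hk] n5 kn \<open>k = 1\<close> by simp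
      ultimately show ?thesis by (simp add: numeral_2_eq_2)
    qed
    then have "(?L, Sig, sig ?L) \<in> PATH n" using sig_state0[OF j2 jn] by simp
    then show ?thesis using True Lne by (simp add: act_def act1_def sig_rotate1)
  next
    case False
    then have k2: "2 \<le> k" and j3: "3 \<le> j" using nij unfolding d_def by auto
    have dd: "d = min (k - 1) (j - 2)" unfolding d_def nij ..
    note ss = sub_seed[OF hk k2 kn j3 jn]
    have "follows (PATH n) (tilde n (n # drop 2 ?L)) (W n d) \<and> act (W n d) (tilde n (n # drop 2 ?L)) = psi_last n (n # drop 2 ?L)"
    proof -
      have "d < k" "1 \<le> d" "d \<le> n - 4" using dd k2 j3 kn by auto
      then show ?thesis using IH[of d "n # drop 2 ?L"] ss(1) ss(4) dd by simp
    qed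
    then show ?thesis using ss by simp
  qed
  have C: "follows (PATH n) (rotate 1 ?L) (replicate (j - 2) Sig) \<and> act (replicate (j - 2) Sig) (rotate 1 ?L) = rotate (j - 1) ?L"
  proof -
    have "\<And>t. t < j - 2 \<Longrightarrow> (rotate t (rotate 1 ?L), Sig, sig (rotate t (rotate 1 ?L))) \<in> PATH n"
    proof -
      fix t assume t: "t < j - 2"
      have m: "t + 1 < n" using t jn by simp
      have e: "(t + 1 + 1) mod n \<noteq> 1 \<and> (t + 1 + 1) mod n \<noteq> j" using t jn by simp
      have "rotate t (rotate 1 ?L) = rotate (t + 1) ?L" by (simp add: rotate1_rotate_swap)
      then show "(rotate t (rotate 1 ?L), Sig, sig (rotate t (rotate 1 ?L))) \<in> PATH n"
        using sig_state[OF j2 jn m] e by simp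
    qed
    moreover have "rotate 1 ?L \<noteq> []" using Lne by simp
    ultimately have "follows (PATH n) (rotate 1 ?L) (replicate (j - 2) Sig) \<and> act (replicate (j - 2) Sig) (rotate 1 ?L) = rotate (j - 2) (rotate 1 ?L)"
      using follows_sigs by blast
    moreover have "rotate (j - 2) (rotate 1 ?L) = rotate (j - 1) ?L"
    proof -
      have e: "j - 2 + 1 = j - 1" using j2 by simp
      have "rotate (j - 2) (rotate 1 ?L) = rotate (j - 2 + 1) ?L" by (rule rotate_rotate)
      then show ?thesis by (simp only: e)
    qed
    ultimately show ?thesis by simp
  qed
  have ntl: "tl \<psi> \<noteq> rev [1..<n - 1]"
  proof
    assume "tl \<psi> = rev [1..<n - 1]"
    then have "n - 2 \<le> height n \<psi>" by (rule height_rev)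
    then show False using hk kn n5 by simp
  qed
  have D: "follows (PATH n) (rotate (j - 1) ?L) [Tau] \<and> act [Tau] (rotate (j - 1) ?L) = rotate (j - 1) (Lj n \<psi> (j - 1))"
    using tau_state[of j] tauL[of j] j2 jn ntl by (simp add: act_def act1_def)
  have jj: "n - i - 1 = j - 1" unfolding j_def by simp
  have Wd: "min (k - 1) (j - 2) = d" using d_def nij by simp
  have B': "follows (PATH n) ?L (W n (min (k - 1) (j - 2))) \<and> act (W n (min (k - 1) (j - 2))) ?L = rotate 1 ?L"
    unfolding Wd by (rule B)
  show ?thesis unfolding j_def[symmetric] jj nij
    using A B' C D by (simp add: follows_append act_append)
qed

end

lemma main_ind:
  assumes n5: "5 \<le> n"
  shows "\<forall>\<psi>. is_seed n \<psi> \<and> height n \<psi> = k \<and> 1 \<le> k \<and> k \<le> n - 4 \<longrightarrow>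
     follows (PATH n) (tilde n \<psi>) (W n k) \<and> act (W n k) (tilde n \<psi>) = psi_last n \<psi>"
proof (induction k rule: less_induct)
  case (less k)
  show ?case
  proof (intro allI impI)
    fix \<psi> assume a: "is_seed n \<psi> \<and> height n \<psi> = k \<and> 1 \<le> k \<and> k \<le> n - 4"
    interpret SD n \<psi> using n5 a by unfold_locales auto
    have hk: "height n \<psi> = k" and k1: "1 \<le> k" and kn: "k \<le> n - 4" using a by auto
    have IH: "\<And>k2 \<psi>2. k2 < k \<Longrightarrow> is_seed n \<psi>2 \<Longrightarrow> height n \<psi>2 = k2 \<Longrightarrow> 1 \<le> k2 \<Longrightarrow> k2 \<le> n - 4 \<Longrightarrow>
        follows (PATH n) (tilde n \<psi>2) (W n k2) \<and> act (W n k2) (tilde n \<psi>2) = psi_last n \<psi>2"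
      using less.IH by blast
    obtain k' where k': "k = Suc k'" using k1 by (cases k) auto
    define f where "f = (\<lambda>i. replicate i Sig @ W n (min k' (n - 2 - i)) @ replicate (n - 2 - i) Sig @ [Tau])"
    have Wk: "W n k = Tau # concat (map f [1..<n - 1])" unfolding k' f_def by simp
    define S where "S = (\<lambda>i. rotate (n - i) (Lj n \<psi> (n - i)))"
    have ntl: "tl \<psi> \<noteq> rev [1..<n - 1]"
  proof
    assume "tl \<psi> = rev [1..<n - 1]"
    then have "n - 2 \<le> height n \<psi>" by (rule height_rev)
    then show False using hk kn n5 by simp
  qed
    have first: "(Lj n \<psi> 1, Tau, tau (Lj n \<psi> 1)) \<in> PATH n" using tau_state[of 1] ntl n5 by simp
    have t1: "tau (Lj n \<psi> 1) = S 1" unfolding S_def using tauL[of 1] firstL n5 by simp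
    have blocks: "follows (PATH n) (S 1) (concat (map f [1..<n - 1])) \<and> act (concat (map f [1..<n - 1])) (S 1) = S (n - 1)"
    proof (rule follows_concat)
      fix i assume i: "1 \<le> i" "i < n - 1"
      have i2: "i \<le> n - 2" using i by simp
      note b = block[OF hk k1 kn IH i(1) i2]
      have fi: "f i = replicate i Sig @ W n (min (k - 1) (n - 2 - i)) @ replicate (n - 2 - i) Sig @ [Tau]"
        unfolding f_def k' by simp
      have e: "n - Suc i = n - i - 1" by simp
      have Ss: "S (Suc i) = rotate (n - i - 1) (Lj n \<psi> (n - i - 1))" unfolding S_def e ..
      show "follows (PATH n) (S i) (f i) \<and> act (f i) (S i) = S (Suc i)"
        unfolding fi Ss unfolding S_def by (rule b)
    qed (use n5 in simp)
    have Sl: "S (n - 1) = psi_last n \<psi>" unfolding S_def using lastL n5 by simp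
    show "follows (PATH n) (tilde n \<psi>) (W n k) \<and> act (W n k) (tilde n \<psi>) = psi_last n \<psi>"
      unfolding Wk tildeL using first t1 blocks Sl by (simp add: act_Cons act1_def)
  qed
qed

theorem mainTheorem5:
  fixes n k :: nat and s :: "nat list"
  assumes "n \<ge> 5" and "1 \<le> k" and "k \<le> n - 4"
    and "is_seed n s" and "s \<notin> Hub n" and "height n s = k"
  shows "follows (PATH n) (tilde n s) (W n k) \<and> act (W n k) (tilde n s) = psi_last n s"
  using main_ind[OF assms(1), of k] assms by blast


end
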